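(* Let $G=(\mathcal{V},\mathcal{E})$ be a directed graph on $n$ nodes, let $f\ge0$, and let $\mathbf{A}\in\mathbb{R}^{k\times n}$ be an assignment matrix. If for every $\mathcal{F}\subseteq\mathcal{V}$ with $|\mathcal{F}|\le f$, every reduced graph of $G$ with respect to $\mathcal{F}$ contains a source component with at least $\max\{f+1,sp(\mathbf{A})\}$ nodes, then $n\ge\max\{sp(\mathbf{A})+2f,\,3f+1\}$.
   Context: An assignment matrix $\mathbf{A}\in\mathbb{R}^{k\times n}$ has nonnegative entries with each column summing to $1$. Its sparsity parameter $sp(\mathbf{A})$ is the smallest integer $s$ such that the sum of any $s$ columns of $\mathbf{A}$ is component-wise positive ($sp(\mathbf{A})=n+1$ if the sum of all columns is not component-wise positive). The directed graph $G$ has no self-loops. Reduced graph: for a set $\mathcal{F}$ with $|\mathcal{F}|\le f$, a subgraph of $G$ obtained by removing all nodes in $\mathcal{F}$ together with their edges and then removing up to $f$ additional incoming edges at each remaining node. A source component of a directed graph is the set of its nodes each of which has a directed path to every other node of that graph. *)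

theory Defs
  imports Complex_Main
begin

text \<open>Matrices A in R^(k x n) are represented as functions nat => nat => real,
  entry A i j for row i < k and column j < n. Graph nodes are {..<n}.\<close>

definition assignment_matrix :: "nat \<Rightarrow> nat \<Rightarrow> (nat \<Rightarrow> nat \<Rightarrow> real) \<Rightarrow> bool" where
  "assignment_matrix k n A \<longleftrightarrow>
     (\<forall>i<k. \<forall>j<n. A i j \<ge> 0) \<and> (\<forall>j<n. (\<Sum>i<k. A i j) = 1)"

definition cols_positive :: "nat \<Rightarrow> (nat \<Rightarrow> nat \<Rightarrow> real) \<Rightarrow> nat set \<Rightarrow> bool" where
  "cols_positive k A S \<longleftrightarrow> (\<forall>i<k. (\<Sum>j\<in>S. A i j) > 0)"

definition sp :: "nat \<Rightarrow> nat \<Rightarrow> (nat \<Rightarrow> nat \<Rightarrow> real) \<Rightarrow> nat" where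
  "sp k n A =
     (if \<exists>s\<le>n. \<forall>S\<subseteq>{..<n}. card S = s \<longrightarrow> cols_positive k A S
      then (LEAST s. s \<le> n \<and> (\<forall>S\<subseteq>{..<n}. card S = s \<longrightarrow> cols_positive k A S))
      else n + 1)"

definition digraph_on :: "nat set \<Rightarrow> (nat \<times> nat) set \<Rightarrow> bool" where
  "digraph_on V E \<longleftrightarrow> E \<subseteq> V \<times> V \<and> (\<forall>v. (v, v) \<notin> E)"

definition reduced_graph ::
  "nat set \<Rightarrow> (nat \<times> nat) set \<Rightarrow> nat \<Rightarrow> nat set \<Rightarrow> (nat \<times> nat) set \<Rightarrow> bool" where
  "reduced_graph V E f F E' \<longleftrightarrow>
     E' \<subseteq> E \<inter> ((V - F) \<times> (V - F)) \<and>
     (\<forall>v\<in>V - F. card {u. (u, v) \<in> (E \<inter> ((V - F) \<times> (V - F))) - E'} \<le> f)"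

definition source_component :: "nat set \<Rightarrow> (nat \<times> nat) set \<Rightarrow> nat set" where
  "source_component V E = {v \<in> V. \<forall>w\<in>V. (v, w) \<in> E\<^sup>*}"

end

theory Submission
  imports Defs
begin

lemma path_stays:
  assumes "(v, w) \<in> E'\<^sup>*" "v \<in> R" "\<forall>x y. (x,y) \<in> E' \<and> x \<in> R \<longrightarrow> y \<in> R"
  shows "w \<in> R"
  using assms(1) by (induction rule: rtrancl_induct) (use assms in auto)

theorem corollary1:
  fixes n k f :: nat and E :: "(nat \<times> nat) set" and A :: "nat \<Rightarrow> nat \<Rightarrow> real"
  assumes "digraph_on {..<n} E"
    and "assignment_matrix k n A"
    and "\<forall>F E'. F \<subseteq> {..<n} \<and> card F \<le> f \<and> reduced_graph {..<n} E f F E' \<longrightarrow>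
           card (source_component ({..<n} - F) E') \<ge> max (f + 1) (sp k n A)"
  shows "n \<ge> max (sp k n A + 2 * f) (3 * f + 1)"
proof (rule ccontr)
  define m where "m = max (f + 1) (sp k n A)"
  assume "\<not> ?thesis"
  hence lt: "n < m + 2 * f" unfolding m_def by auto
  have m1: "m \<ge> f + 1" unfolding m_def by auto
  show False
  proof (cases "n \<le> f")
    case True
    have "reduced_graph {..<n} E f {..<n} {}"
      unfolding reduced_graph_def by auto
    moreover have "card {..<n} \<le> f" using True by simp
    ultimately have "card (source_component ({..<n} - {..<n}) {}) \<ge> m"
      using assms(3) unfolding m_def by blast
    moreover have "source_component ({..<n} - {..<n}) {} = {}"
      unfolding source_component_def by auto
    ultimately show False using m1 by simp
  next
    case False
    define F where "F = {..<f}"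
    define V' where "V' = {f..<n}"
    define L where "L = {f..<f+m-1} \<inter> V'"
    define R where "R = {f+m-1..<n}"
    define E' where "E' = E \<inter> (V' \<times> V') - R \<times> L"
    have VF: "{..<n} - F = V'" using False unfolding F_def V'_def by auto
    have cF: "card F \<le> f" "F \<subseteq> {..<n}" using False unfolding F_def by auto
    have cR: "card R \<le> f" unfolding R_def using lt by simp
    have "reduced_graph {..<n} E f F E'"
      unfolding reduced_graph_def VF
    proof (intro conjI ballI)
      show "E' \<subseteq> E \<inter> (V' \<times> V')" unfolding E'_def by auto
    next
      fix v assume "v \<in> V'"
      have "{u. (u, v) \<in> E \<inter> (V' \<times> V') - E'} \<subseteq> R" unfolding E'_def by auto
      hence "card {u. (u, v) \<in> E \<inter> (V' \<times> V') - E'} \<le> card R"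
        by (rule card_mono[rotated]) (simp add: R_def)
      thus "card {u. (u, v) \<in> E \<inter> (V' \<times> V') - E'} \<le> f" using cR by simp
    qed
    hence ge: "card (source_component V' E') \<ge> m"
      using assms(3) cF VF unfolding m_def by metis
    have sub: "source_component V' E' \<subseteq> L"
    proof
      fix v assume v: "v \<in> source_component V' E'"
      hence vV: "v \<in> V'" and reach: "\<forall>w\<in>V'. (v, w) \<in> E'\<^sup>*"
        unfolding source_component_def by auto
      show "v \<in> L"
      proof (rule ccontr)
        assume "v \<notin> L"
        hence vR: "v \<in> R" using vV unfolding L_def R_def V'_def by auto
        hence "m \<ge> 2" using lt m1 False unfolding R_def by auto
        hence fL: "f \<in> L" "f \<in> V'" using False unfolding L_def V'_def by auto
        have "\<forall>x y. (x,y) \<in> E' \<and> x \<in> R \<longrightarrow> y \<in> R"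
          unfolding E'_def R_def L_def V'_def by auto
        hence "f \<in> R" using path_stays[OF _ vR] reach fL by blast
        thus False using fL unfolding R_def L_def by auto
      qed
    qed
    have "card L \<le> m - 1" unfolding L_def V'_def by simp
    hence "card (source_component V' E') \<le> m - 1"
      using card_mono[OF _ sub] L_def by (meson finite_Int finite_atLeastLessThan le_trans)
    thus False using ge m1 by linarith
  qed
qed

end
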